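(* Let $q$ be a prime power, $m\ge1$, let $g_1,\dots,g_n\in\mathbb{F}_{q^m}$ be linearly independent over $\mathbb{F}_q$ and $r_1,\dots,r_n\in\mathbb{F}_{q^m}$. Define $\Pi_1(x):=x^q-g_1^{q-1}x$, $\Lambda_1(x):=\frac{r_1}{g_1}x$, and for $i=1,\dots,n-1$ $$\Pi_{i+1}(x):=\big(x^q-\Pi_i(g_{i+1})^{q-1}x\big)\circ\Pi_i(x),\qquad \Lambda_{i+1}(x):=\Lambda_i(x)-\frac{\Lambda_i(g_{i+1})-r_{i+1}}{\Pi_i(g_{i+1})}\Pi_i(x).$$ Then $\Pi_i(x)=\Pi_{\langle g_1,\dots,g_i\rangle}(x)$ and $\Lambda_i(x)=\Lambda_{(g_1,\dots,g_i),(r_1,\dots,r_i)}(x)$ for $i=1,\dots,n$.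
   Context: Write $[i]:=q^i$. $\langle\cdot\rangle$ denotes $\mathbb{F}_q$-linear span. For an $\mathbb{F}_q$-subspace $U\subseteq\mathbb{F}_{q^m}$, $\Pi_U(x)=\prod_{u\in U}(x-u)$ is the $q$-annihilator polynomial. For $\mathbb{F}_q$-linearly independent $h_1,\dots,h_s\in\mathbb{F}_{q^m}$ and $\mathbf h=(h_1,\dots,h_s)$, $\boldsymbol\rho=(\rho_1,\dots,\rho_s)\in\mathbb{F}_{q^m}^s$, the $q$-Lagrange polynomial is $\Lambda_{\mathbf h,\boldsymbol\rho}(x)=\sum_{i=1}^s(-1)^{s-i}\rho_i\det(\mathfrak D_i(\mathbf h,x))/\det(M_s(h_1,\dots,h_s))$, where $M_s(v_1,\dots,v_t)$ is the $s\times t$ matrix with $(j,l)$ entry $v_l^{[j-1]}$ and $\mathfrak D_i(\mathbf h,x)$ is $M_s(h_1,\dots,h_s,x)$ with its $i$-th column removed. *)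

theory Defs
  imports "HOL-Computational_Algebra.Polynomial" "HOL-Computational_Algebra.Primes"
          "HOL-Combinatorics.Permutations"
begin

definition Fq :: "nat \<Rightarrow> 'a::field set" where
  "Fq q = {x. x ^ q = x}"

definition prime_power :: "nat \<Rightarrow> bool" where
  "prime_power q \<longleftrightarrow> (\<exists>p k. prime p \<and> k > 0 \<and> q = p ^ k)"

definition Fq_lin_indep :: "nat \<Rightarrow> nat \<Rightarrow> (nat \<Rightarrow> 'a::field) \<Rightarrow> bool" where
  "Fq_lin_indep q n g \<longleftrightarrow>
     (\<forall>c. (\<forall>j. c j \<in> Fq q) \<longrightarrow> (\<Sum>j=1..n. c j * g j) = 0 \<longrightarrow> (\<forall>j\<in>{1..n}. c j = 0))"

definition Fq_span :: "nat \<Rightarrow> nat \<Rightarrow> (nat \<Rightarrow> 'a::field) \<Rightarrow> 'a set" where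
  "Fq_span q i g = {\<Sum>j=1..i. c j * g j | c. \<forall>j. c j \<in> Fq q}"

definition annih :: "'a::field set \<Rightarrow> 'a poly" where
  "annih U = (\<Prod>u\<in>U. [:-u, 1:])"

definition detn :: "nat \<Rightarrow> (nat \<Rightarrow> nat \<Rightarrow> 'a::comm_ring_1) \<Rightarrow> 'a" where
  "detn s M = (\<Sum>p\<in>{p. p permutes {1..s}}. of_int (sign p) * (\<Prod>a=1..s. M a (p a)))"

definition Moore :: "nat \<Rightarrow> (nat \<Rightarrow> 'a::field) \<Rightarrow> nat \<Rightarrow> nat \<Rightarrow> 'a" where
  "Moore q h a l = h l ^ (q ^ (a - 1))"

(* D_j(h,x): M_s(h_1,...,h_s,x) (polynomial entries in x) with the j-th column removed *)
definition Dmat :: "nat \<Rightarrow> nat \<Rightarrow> (nat \<Rightarrow> 'a::field) \<Rightarrow> nat \<Rightarrow> nat \<Rightarrow> nat \<Rightarrow> 'a poly" where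
  "Dmat q s h j a b =
     (let l = (if b < j then b else b + 1) in
      if l \<le> s then [: h l ^ (q ^ (a - 1)) :] else monom 1 (q ^ (a - 1)))"

definition qLagrange :: "nat \<Rightarrow> nat \<Rightarrow> (nat \<Rightarrow> 'a::field) \<Rightarrow> (nat \<Rightarrow> 'a) \<Rightarrow> 'a poly" where
  "qLagrange q s h \<rho> =
     (\<Sum>i=1..s. smult ((-1) ^ (s - i) * \<rho> i / detn s (Moore q h)) (detn s (Dmat q s h i)))"

(* PiS q g k = Pi_{k+1},  LamS q g r k = Lambda_{k+1} *)
primrec PiS :: "nat \<Rightarrow> (nat \<Rightarrow> 'a::field) \<Rightarrow> nat \<Rightarrow> 'a poly" where
  "PiS q g 0 = monom 1 q - smult (g 1 ^ (q - 1)) [:0, 1:]"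
| "PiS q g (Suc k) =
     pcompose (monom 1 q - smult (poly (PiS q g k) (g (k + 2)) ^ (q - 1)) [:0, 1:]) (PiS q g k)"

primrec LamS :: "nat \<Rightarrow> (nat \<Rightarrow> 'a::field) \<Rightarrow> (nat \<Rightarrow> 'a) \<Rightarrow> nat \<Rightarrow> 'a poly" where
  "LamS q g r 0 = smult (r 1 / g 1) [:0, 1:]"
| "LamS q g r (Suc k) =
     LamS q g r k - smult ((poly (LamS q g r k) (g (k + 2)) - r (k + 2)) / poly (PiS q g k) (g (k + 2)))
                          (PiS q g k)"

end

theory Submission
  imports Defs
begin


lemma of_nat_card_ff: "of_nat (card (UNIV::'a::{finite,field} set)) = (0::'a)"
proof -
  have b: "bij_betw (\<lambda>y. 1 + y) (UNIV::'a set) UNIV"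
    by (rule bij_betwI[of _ _ _ "\<lambda>y. y - 1"]) auto
  have "sum (\<lambda>y. y) (UNIV::'a set) = sum (\<lambda>y. 1 + y) UNIV"
    using sum.reindex_bij_betw[OF b, of "\<lambda>y. y"] by simp
  also have "\<dots> = of_nat (card (UNIV::'a set)) + sum (\<lambda>y. y) UNIV" by (simp add: sum.distrib)
  finally show ?thesis by simp
qed

lemma char_field_power:
  fixes q m :: nat
  assumes "prime_power q" "m \<ge> 1" "card (UNIV :: 'a::{finite,field} set) = q ^ m"
  obtains p k where "prime p" "k > 0" "q = p ^ k" "CHAR('a) = p"
proof -
  obtain p k where pk: "prime p" "k > 0" "q = p ^ k" using assms(1) unfolding prime_power_def by auto
  have "CHAR('a) > 0" by (simp add: finite_imp_CHAR_pos)
  hence pc: "prime CHAR('a)" by (rule prime_CHAR_semidom)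
  have "CHAR('a) dvd card (UNIV :: 'a set)" using of_nat_card_ff[where 'a='a] of_nat_eq_0_iff_char_dvd by blast
  hence "CHAR('a) dvd p ^ (k*m)" using assms(3) pk(3) by (simp add: power_mult)
  hence "CHAR('a) dvd p" using pc prime_dvd_power by blast
  hence "CHAR('a) = p" using pc pk(1) primes_dvd_imp_eq by blast
  thus ?thesis using that pk by blast
qed

lemma frob_add:
  fixes q m :: nat
  assumes "prime_power q" "m \<ge> 1" "card (UNIV :: 'a::{finite,field} set) = q ^ m"
  shows "\<And>x y::'a. (x + y) ^ q = x ^ q + y ^ q"
proof -
  obtain p k where pk: "prime p" "k > 0" "q = p ^ k" "CHAR('a) = p"
    using char_field_power[OF assms] by blast
  fix x y :: 'a
  show "(x + y) ^ q = x ^ q + y ^ q"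
    by (rule freshmans_dream') (use pk in auto)
qed



lemma fermat_ff: "(x::'a::{finite,field}) ^ card (UNIV::'a set) = x"
proof (cases "x = 0")
  case True thus ?thesis by (simp add: finite_UNIV_card_ge_0)
next
  case False
  define S where "S = (UNIV::'a set) - {0}"
  have i: "inj_on ((*) x) S" unfolding inj_on_def using False by simp
  have im: "((*) x) ` S = S"
  proof
    show "(*) x ` S \<subseteq> S" using False unfolding S_def by auto
    show "S \<subseteq> (*) x ` S"
    proof
      fix y assume y: "y \<in> S"
      have "y = x * (y / x)" using False by simp
      moreover have "y / x \<in> S" using y False unfolding S_def by auto
      ultimately show "y \<in> (*) x ` S" by blast
    qed
  qed
  have "prod (\<lambda>y. y) S = prod (\<lambda>y. x * y) S"
    using prod.reindex[OF i, of "\<lambda>y. y"] im by simp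
  also have "\<dots> = x ^ card S * prod (\<lambda>y. y) S" by (simp add: prod.distrib)
  finally have "x ^ card S = 1" using prod_zero_iff[of S "\<lambda>y. y"] unfolding S_def by auto
  moreover have "card S = card (UNIV::'a set) - 1" unfolding S_def by (simp add: card_Diff_singleton)
  moreover have "card (UNIV::'a set) > 0" by (simp add: finite_UNIV_card_ge_0)
  ultimately show ?thesis by (metis One_nat_def Suc_pred mult.right_neutral power_Suc)
qed

lemma frob_pow:
  assumes frob: "\<And>x y::'a::comm_ring_1. (x + y) ^ q = x ^ q + y ^ q"
  shows "(x + y) ^ (q ^ i) = x ^ (q ^ i) + (y::'a) ^ (q ^ i)"
proof (induction i arbitrary: x y)
  case 0 thus ?case by simp
next
  case (Suc i)
  have "(x + y) ^ (q ^ Suc i) = ((x+y) ^ (q ^ i)) ^ q" by (simp add: power_mult[symmetric] mult.commute)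
  also have "\<dots> = (x ^ (q ^ i)) ^ q + (y ^ (q ^ i)) ^ q" using Suc frob by simp
  finally show ?case by (simp add: power_mult[symmetric] mult.commute)
qed

lemma frob_pow_minus:
  assumes frob: "\<And>x y::'a::comm_ring_1. (x + y) ^ q = x ^ q + y ^ q"
  shows "(x - y) ^ (q ^ i) = x ^ (q ^ i) - (y::'a) ^ (q ^ i)"
  using frob_pow[OF frob, of "x - y" y i] by (simp add: algebra_simps)

lemma card_Fq:
  fixes q m :: nat
  assumes frob: "\<And>x y::'a. (x + y) ^ q = x ^ q + y ^ q"
    and q2: "q \<ge> 2" and m: "m \<ge> 1" and card: "card (UNIV :: 'a::{finite,field} set) = q ^ m"
  shows "card (Fq q :: 'a set) = q"
proof -
  define T :: "'a poly" where "T = (\<Sum>i<m. monom 1 (q ^ i))"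
  have polyT: "poly T y = (\<Sum>i<m. y ^ (q ^ i))" for y unfolding T_def by (simp add: poly_sum poly_monom)
  have inj: "q ^ i = q ^ j \<longleftrightarrow> i = j" for i j using q2 by (simp add: power_inject_exp)
  have "coeff T (q ^ (m-1)) = (\<Sum>i<m. if q ^ i = q ^ (m - 1) then 1 else 0)"
    unfolding T_def by (simp add: coeff_sum)
  also have "\<dots> = (\<Sum>i\<in>{m-1}. 1)" unfolding inj
    by (rule sum.mono_neutral_cong_right) (use m in auto)
  finally have "coeff T (q ^ (m-1)) = 1" by simp
  hence T0: "T \<noteq> 0" by auto
  have degT: "degree T \<le> q ^ (m - 1)" unfolding T_def
    using q2 by (intro degree_sum_le) (auto intro!: order.trans[OF degree_monom_le] power_increasing)
  define R where "R = {y. poly T y = 0}"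
  have cardR: "card R \<le> q ^ (m-1)" unfolding R_def using card_poly_roots_bound[OF T0] degT by linarith
  define \<phi> where "\<phi> x = x ^ q - x" for x :: 'a
  have phiR: "\<phi> x \<in> R" for x
  proof -
    have "poly T (\<phi> x) = (\<Sum>i<m. x ^ (q ^ Suc i) - x ^ (q ^ i))"
      unfolding polyT \<phi>_def frob_pow_minus[OF frob]
      by (simp add: power_mult[symmetric] mult.commute)
    also have "\<dots> = x ^ (q ^ m) - x ^ (q ^ 0)" by (rule sum_lessThan_telescope)
    also have "\<dots> = 0" using fermat_ff[of x] card by simp
    finally show ?thesis unfolding R_def by simp
  qed
  have fq1: "x - y \<in> Fq q \<longleftrightarrow> \<phi> x = \<phi> y" for x y
  proof -
    have e: "(x - y)^q = x^q - y^q" using frob_pow_minus[OF frob, of x y 1] by simp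
    show ?thesis unfolding Fq_def \<phi>_def by (simp add: e eq_iff_diff_eq_0[of "x^q - y^q"] eq_iff_diff_eq_0[of "x^q - x"] algebra_simps)
  qed
  have fib: "card (\<phi> -` {y}) \<le> card (Fq q :: 'a set)" for y
  proof (cases "\<phi> -` {y} = {}")
    case True thus ?thesis by simp
  next
    case False
    then obtain x0 where x0: "\<phi> x0 = y" by auto
    have "\<phi> -` {y} \<subseteq> (\<lambda>z. x0 + z) ` Fq q"
    proof
      fix x assume "x \<in> \<phi> -` {y}"
      hence "x - x0 \<in> Fq q" using fq1 x0 by auto
      thus "x \<in> (\<lambda>z. x0 + z) ` Fq q" by (auto intro!: image_eqI[of _ _ "x - x0"])
    qed
    hence "card (\<phi> -` {y}) \<le> card ((\<lambda>z. x0 + z) ` Fq q)" by (intro card_mono) auto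
    also have "\<dots> \<le> card (Fq q :: 'a set)" by (rule card_image_le) simp
    finally show ?thesis .
  qed
  have "(UNIV::'a set) = (\<Union>y\<in>R. \<phi> -` {y})" using phiR by auto
  hence "q ^ m \<le> (\<Sum>y\<in>R. card (\<phi> -` {y}))" using card card_UN_le[of R "\<lambda>y. \<phi> -` {y}"] by simp
  also have "\<dots> \<le> card R * card (Fq q :: 'a set)" using sum_bounded_above[of R "\<lambda>y. card (\<phi> -` {y})"] fib by auto
  also have "\<dots> \<le> q ^ (m-1) * card (Fq q :: 'a set)" using cardR by simp
  finally have "q ^ (m - 1) * q \<le> q ^ (m-1) * card (Fq q :: 'a set)"
    using m by (metis Suc_diff_1 less_le_trans mult.commute power_Suc zero_less_one)
  hence ge: "q \<le> card (Fq q :: 'a set)" using q2 by simp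
  define U :: "'a poly" where "U = monom 1 q - [:0, 1:]"
  have cU: "coeff U q = 1" using q2 unfolding U_def by (simp add: coeff_pCons split: nat.split)
  hence U0: "U \<noteq> 0" by auto
  have "degree U \<le> q" unfolding U_def using q2
    by (intro degree_diff_le) (auto simp: degree_monom_le)
  moreover have "Fq q = {x. poly U x = 0}" unfolding U_def Fq_def by (simp add: poly_monom)
  ultimately have "card (Fq q :: 'a set) \<le> q" using card_poly_roots_bound[OF U0] by simp
  with ge show ?thesis by simp
qed



locale qsetting =
  fixes q n :: nat and g :: "nat \<Rightarrow> 'a::{finite,field}"
  assumes frob: "\<And>x y::'a. (x + y) ^ q = x ^ q + y ^ q"
    and q2: "q \<ge> 2" and cardFq: "card (Fq q :: 'a set) = q"
    and indep: "Fq_lin_indep q n g"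
begin

lemma q_pos: "q > 0" using q2 by linarith

lemma zero_pow[simp]: "(0::'a) ^ q = 0" using q_pos by simp

lemma neg_pow: "(- x :: 'a) ^ q = - (x ^ q)"
proof -
  have "(x + - x) ^ q = x ^ q + (- x) ^ q" by (rule frob)
  thus ?thesis by (simp add: eq_neg_iff_add_eq_0 add.commute)
qed

lemma diff_pow: "(x - y :: 'a) ^ q = x ^ q - y ^ q"
  using frob[of x "-y"] neg_pow[of y] by simp

lemma Fq_0[simp]: "(0::'a) \<in> Fq q" and Fq_1[simp]: "(1::'a) \<in> Fq q"
  unfolding Fq_def using q_pos by auto

lemma Fq_add: "(a::'a) \<in> Fq q \<Longrightarrow> b \<in> Fq q \<Longrightarrow> a + b \<in> Fq q"
  unfolding Fq_def by (simp add: frob)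
lemma Fq_mult: "(a::'a) \<in> Fq q \<Longrightarrow> b \<in> Fq q \<Longrightarrow> a * b \<in> Fq q"
  unfolding Fq_def by (auto simp: power_mult_distrib)
lemma Fq_uminus: "(a::'a) \<in> Fq q \<Longrightarrow> - a \<in> Fq q"
  unfolding Fq_def by (simp add: neg_pow)
lemma Fq_diff: "(a::'a) \<in> Fq q \<Longrightarrow> b \<in> Fq q \<Longrightarrow> a - b \<in> Fq q"
  unfolding Fq_def by (simp add: diff_pow)

lemma Fq_pow: "(c::'a) \<in> Fq q \<Longrightarrow> c ^ (q ^ e) = c"
proof (induction e)
  case 0 thus ?case by simp
next
  case (Suc e)
  have "c ^ (q ^ Suc e) = (c ^ (q ^ e)) ^ q" by (simp add: power_mult[symmetric] mult.commute)
  thus ?case using Suc unfolding Fq_def by simp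
qed

definition qlin :: "('a \<Rightarrow> 'a) \<Rightarrow> bool" where
  "qlin f \<longleftrightarrow> (\<forall>x y. f (x + y) = f x + f y) \<and> (\<forall>c x. c \<in> Fq q \<longrightarrow> f (c * x) = c * f x)"

lemma qlin_add_eq: "qlin f \<Longrightarrow> f (x + y) = f x + f y" unfolding qlin_def by blast
lemma qlin_mult_eq: "qlin f \<Longrightarrow> c \<in> Fq q \<Longrightarrow> f (c * x) = c * f x" unfolding qlin_def by blast
lemma qlin_zero_eq: "qlin f \<Longrightarrow> f 0 = 0" using qlin_add_eq[of f 0 0] by (metis add_cancel_right_right add_0)

lemma qlin_sum_eq: "qlin f \<Longrightarrow> f (\<Sum>i\<in>I. h i) = (\<Sum>i\<in>I. f (h i))"
  by (induction I rule: infinite_finite_induct) (auto simp: qlin_zero_eq qlin_add_eq)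

lemma qlin_pow: "qlin (\<lambda>x. x ^ (q ^ e))"
  unfolding qlin_def using frob_pow[OF frob] Fq_pow by (auto simp: power_mult_distrib)

lemma qlin_cmult: "qlin f \<Longrightarrow> qlin (\<lambda>x. a * f x)"
  unfolding qlin_def by (auto simp: algebra_simps)

lemma qlin_id: "qlin (\<lambda>x. x)" unfolding qlin_def by auto

lemma qlin_addf: "qlin f \<Longrightarrow> qlin h \<Longrightarrow> qlin (\<lambda>x. f x + h x)"
  unfolding qlin_def by (auto simp: algebra_simps)
lemma qlin_diff: "qlin f \<Longrightarrow> qlin h \<Longrightarrow> qlin (\<lambda>x. f x - h x)"
  unfolding qlin_def by (auto simp: algebra_simps)
lemma qlin_comp: "qlin f \<Longrightarrow> qlin h \<Longrightarrow> qlin (\<lambda>x. f (h x))"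
  unfolding qlin_def by auto
lemma qlin_sumf: "(\<And>i. i \<in> I \<Longrightarrow> qlin (f i)) \<Longrightarrow> qlin (\<lambda>x. \<Sum>i\<in>I. f i x)"
proof (induction I rule: infinite_finite_induct)
  case (infinite A) thus ?case by (simp add: qlin_def)
next
  case empty thus ?case by (simp add: qlin_def)
next
  case (insert x F) thus ?case by (simp add: qlin_addf)
qed

abbreviation V :: "nat \<Rightarrow> 'a set" where "V i \<equiv> Fq_span q i g"

lemma g_in_V: "j \<in> {1..i} \<Longrightarrow> g j \<in> V i"
proof -
  assume j: "j \<in> {1..i}"
  have "(\<Sum>l=1..i. (if l = j then 1 else 0) * g l) = (\<Sum>l=1..i. if l = j then g l else 0)"
    by (rule sum.cong) auto
  also have "\<dots> = g j" using j by simp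
  finally have A: "(\<Sum>l=1..i. (if l = j then 1 else 0) * g l) = g j" .
  have B: "\<forall>l. (if l = j then 1 else 0 :: 'a) \<in> Fq q" by simp
  show ?thesis unfolding Fq_span_def
    by (rule CollectI, rule exI[of _ "\<lambda>l. if l = j then 1 else 0 :: 'a"]) (use A B in simp)
qed

lemma qlin_vanish:
  assumes "qlin f" "\<And>j. j \<in> {1..i} \<Longrightarrow> f (g j) = 0" "v \<in> V i"
  shows "f v = 0"
proof -
  obtain c where c: "v = (\<Sum>j=1..i. c j * g j)" "\<forall>j. c j \<in> Fq q"
    using assms(3) unfolding Fq_span_def by auto
  have "f v = (\<Sum>j=1..i. f (c j * g j))" unfolding c(1) by (rule qlin_sum_eq[OF assms(1)])
  also have "\<dots> = (\<Sum>j=1..i. c j * f (g j))" using qlin_mult_eq[OF assms(1)] c(2) by simp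
  also have "\<dots> = 0" using assms(2) by simp
  finally show ?thesis .
qed

lemma indep_i:
  assumes "i \<le> n" "\<forall>j. c j \<in> Fq q" "(\<Sum>j=1..i. c j * g j) = 0" "j \<in> {1..i}"
  shows "c j = 0"
proof -
  define c' where "c' l = (if l \<in> {1..i} then c l else 0)" for l
  have "\<forall>l. c' l \<in> Fq q" using assms(2) unfolding c'_def by simp
  moreover have "(\<Sum>l=1..n. c' l * g l) = (\<Sum>l=1..i. c' l * g l)"
    by (rule sum.mono_neutral_right) (use assms(1) in \<open>auto simp: c'_def\<close>)
  moreover have "(\<Sum>l=1..i. c' l * g l) = (\<Sum>l=1..i. c l * g l)"
    by (rule sum.cong) (auto simp: c'_def)
  ultimately have "\<forall>l\<in>{1..n}. c' l = 0" using indep assms(3) unfolding Fq_lin_indep_def by metis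
  hence "c' j = 0" using assms(1,4) by auto
  thus ?thesis using assms(4) unfolding c'_def by auto
qed

lemma notin_V:
  assumes "i < n" shows "g (i + 1) \<notin> V i"
proof
  assume "g (i + 1) \<in> V i"
  then obtain c where c: "g (i+1) = (\<Sum>j=1..i. c j * g j)" "\<forall>j. c j \<in> Fq q"
    unfolding Fq_span_def by auto
  define c' where "c' l = (if l = i + 1 then - 1 else c l)" for l
  have "\<forall>l. c' l \<in> Fq q" using c(2) Fq_uminus[OF Fq_1] unfolding c'_def by simp
  moreover have "(\<Sum>l=1..i+1. c' l * g l) = 0"
  proof -
    have "(\<Sum>l=1..i+1. c' l * g l) = (\<Sum>l=1..i. c' l * g l) + c' (i+1) * g (i+1)"
      by simp
    also have "(\<Sum>l=1..i. c' l * g l) = (\<Sum>l=1..i. c l * g l)"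
      by (rule sum.cong) (auto simp: c'_def)
    finally show ?thesis using c(1) by (simp add: c'_def)
  qed
  moreover have "i + 1 \<le> n" "i + 1 \<in> {1..i+1}" using assms by auto
  ultimately have "c' (i+1) = 0" using indep_i[of "i+1" c' "i+1"] by blast
  thus False unfolding c'_def by simp
qed

lemma card_V:
  assumes "i \<le> n" shows "card (V i) = q ^ i"
proof -
  define C where "C = {c :: nat \<Rightarrow> 'a. (\<forall>j. c j \<in> Fq q) \<and> (\<forall>j. j \<notin> {1..i} \<longrightarrow> c j = 0)}"
  define S where "S c = (\<Sum>j=1..i. c j * g j)" for c
  have VC: "V i = S ` C"
  proof
    show "S ` C \<subseteq> V i" unfolding C_def S_def Fq_span_def by auto
    show "V i \<subseteq> S ` C"
    proof
      fix v assume "v \<in> V i"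
      then obtain c where c: "v = S c" "\<forall>j. c j \<in> Fq q" unfolding Fq_span_def S_def by auto
      define c' where "c' l = (if l \<in> {1..i} then c l else 0)" for l
      have "c' \<in> C" using c(2) unfolding c'_def C_def by auto
      moreover have "S c' = S c" unfolding S_def by (rule sum.cong) (auto simp: c'_def)
      ultimately show "v \<in> S ` C" using c(1) by (metis image_eqI)
    qed
  qed
  have inj: "inj_on S C"
  proof
    fix c d assume cd: "c \<in> C" "d \<in> C" "S c = S d"
    have "(\<Sum>j=1..i. (c j - d j) * g j) = S c - S d"
      unfolding S_def by (simp add: algebra_simps sum_subtractf)
    hence "(\<Sum>j=1..i. (c j - d j) * g j) = 0" using cd(3) by simp
    moreover have "\<forall>j. c j - d j \<in> Fq q" using cd(1,2) Fq_diff unfolding C_def by auto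
    ultimately have *: "\<forall>j\<in>{1..i}. c j - d j = 0" using indep_i[OF assms, of "\<lambda>j. c j - d j"] by blast
    show "c = d"
    proof
      fix j show "c j = d j"
      proof (cases "j \<in> {1..i}")
        case True thus ?thesis using * by simp
      next
        case False thus ?thesis using cd(1,2) unfolding C_def by simp
      qed
    qed
  qed
  have "bij_betw (\<lambda>c. restrict c {1..i}) C (PiE {1..i} (\<lambda>_. Fq q))"
  proof (rule bij_betwI[where g = "\<lambda>f l. if l \<in> {1..i} then f l else 0"])
    show "(\<lambda>c. restrict c {1..i}) \<in> C \<rightarrow> PiE {1..i} (\<lambda>_. Fq q)" unfolding C_def by auto
    show "(\<lambda>f l. if l \<in> {1..i} then f l else 0) \<in> PiE {1..i} (\<lambda>_. Fq q) \<rightarrow> C"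
      unfolding C_def by (auto simp: PiE_def Pi_def)
    show "(\<lambda>l. if l \<in> {1..i} then restrict c {1..i} l else 0) = c" if "c \<in> C" for c
      using that unfolding C_def by (auto intro!: ext)
    show "restrict (\<lambda>l. if l \<in> {1..i} then f l else 0) {1..i} = f" if "f \<in> PiE {1..i} (\<lambda>_. Fq q :: 'a set)" for f
      using that by (auto intro!: ext simp: PiE_def extensional_def)
  qed
  hence "card C = card (PiE {1..i} (\<lambda>_. Fq q :: 'a set))" by (rule bij_betw_same_card)
  also have "\<dots> = q ^ i" by (simp add: card_PiE cardFq)
  finally show ?thesis unfolding VC using card_image[OF inj] by simp
qed

end


lemma poly_eq0_many:
  fixes p :: "'a::field poly"
  assumes "degree p < card S" "finite S" "\<forall>x\<in>S. poly p x = 0"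
  shows "p = 0"
proof (rule ccontr)
  assume p0: "p \<noteq> 0"
  have "S \<subseteq> {x. poly p x = 0}" using assms(3) by auto
  hence "card S \<le> card {x. poly p x = 0}" using poly_roots_finite[OF p0] by (rule card_mono[rotated])
  also have "\<dots> \<le> degree p" by (rule card_poly_roots_bound[OF p0])
  finally show False using assms(1) by simp
qed

lemma annih_degree: "finite U \<Longrightarrow> degree (annih U) = card (U::'a::field set)"
  unfolding annih_def by (subst degree_prod_eq_sum_degree) auto

lemma annih_lead: "lead_coeff (annih (U::'a::field set)) = 1"
  unfolding annih_def by (simp add: lead_coeff_prod)

lemma annih_poly: "finite U \<Longrightarrow> poly (annih U) x = 0 \<longleftrightarrow> x \<in> (U::'a::field set)"
  unfolding annih_def by (simp add: poly_prod)

lemma monic_diff_degree: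
  fixes p r :: "'a::field poly"
  assumes "degree p = N" "degree r = N" "lead_coeff p = lead_coeff r" "N > 0"
  shows "degree (p - r) < N"
proof (cases "p - r = 0")
  case True thus ?thesis using assms by simp
next
  case False
  have "degree (p - r) \<le> N" using degree_diff_le[of p N r] assms by simp
  moreover have "coeff (p - r) N = 0" using assms by simp
  ultimately show ?thesis using False leading_coeff_0_iff
    by (metis le_neq_implies_less)
qed

context qsetting
begin

lemma L_poly: "poly (monom 1 q - smult (a::'a) [:0, 1:]) t = t ^ q - a * t"
  by (simp add: poly_monom mult.commute)

lemma L_coeff: "coeff (monom 1 q - smult (a::'a) [:0, 1:]) q = 1"
  using q2 by (simp add: coeff_pCons split: nat.split)

lemma L_degree: "degree (monom 1 q - smult (a::'a) [:0, 1:]) = q"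
proof (rule antisym)
  show "degree (monom 1 q - smult (a::'a) [:0, 1:]) \<le> q"
    using q2 by (intro degree_diff_le) (auto simp: degree_monom_le)
  show "q \<le> degree (monom 1 q - smult (a::'a) [:0, 1:])"
    using L_coeff[of a] by (intro le_degree) simp
qed

lemma L_lead: "lead_coeff (monom 1 q - smult (a::'a) [:0, 1:]) = 1"
  using L_degree L_coeff by simp

lemma L_qlin: "qlin (\<lambda>t. t ^ q - (a::'a) * t)"
  using qlin_diff[OF qlin_pow[of 1] qlin_cmult[OF qlin_id, of a]] by simp

lemma PiS_props:
  "degree (PiS q g k) = q ^ (k+1) \<and> lead_coeff (PiS q g k) = 1 \<and> qlin (poly (PiS q g k))
    \<and> (\<forall>j\<in>{1..k+1}. poly (PiS q g k) (g j) = 0)"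
proof (induction k)
  case 0
  have "poly (PiS q g 0) = (\<lambda>t. t ^ q - g 1 ^ (q - 1) * t)"
    by (rule ext) (simp only: PiS.simps L_poly)
  hence "qlin (poly (PiS q g 0))" using L_qlin[of "g 1 ^ (q - 1)"] by simp
  moreover have "poly (PiS q g 0) (g 1) = 0"
  proof -
    have "g 1 ^ (q - 1) * g 1 = g 1 ^ q" using q_pos by (metis Suc_diff_1 power_Suc2)
    thus ?thesis by (simp only: PiS.simps L_poly) simp
  qed
  ultimately show ?case using L_degree L_lead by (simp only: PiS.simps) auto
next
  case (Suc k)
  define P where "P = PiS q g k"
  define a where "a = poly P (g (k + 2)) ^ (q - 1)"
  have IH: "degree P = q ^ (k+1)" "lead_coeff P = 1" "qlin (poly P)" "\<forall>j\<in>{1..k+1}. poly P (g j) = 0"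
    using Suc unfolding P_def by auto
  have eq: "PiS q g (Suc k) = pcompose (monom 1 q - smult a [:0, 1:]) P"
    unfolding P_def a_def by simp
  have pol: "poly (PiS q g (Suc k)) x = poly P x ^ q - a * poly P x" for x
    unfolding eq by (simp only: poly_pcompose L_poly)
  have "degree (PiS q g (Suc k)) = q ^ (Suc k + 1)"
    unfolding eq degree_pcompose L_degree IH(1) by simp
  moreover have "degree P > 0" using IH(1) q_pos by simp
  hence "lead_coeff (PiS q g (Suc k)) = 1"
    unfolding eq using lead_coeff_comp[of P] L_lead L_degree IH(2) by simp
  moreover have "qlin (poly (PiS q g (Suc k)))"
    unfolding pol[abs_def] using qlin_comp[OF L_qlin[of a] IH(3)] by simp
  moreover have "\<forall>j\<in>{1..Suc k+1}. poly (PiS q g (Suc k)) (g j) = 0"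
  proof
    fix j assume j: "j \<in> {1..Suc k + 1}"
    show "poly (PiS q g (Suc k)) (g j) = 0"
    proof (cases "j = k + 2")
      case True
      have "poly P (g (k+2)) ^ (q - 1) * poly P (g (k+2)) = poly P (g (k+2)) ^ q"
        using q_pos by (metis Suc_diff_1 power_Suc2)
      thus ?thesis using True unfolding pol a_def by simp
    next
      case False
      hence "j \<in> {1..k+1}" using j by auto
      thus ?thesis using IH(4) unfolding pol by simp
    qed
  qed
  ultimately show ?case by blast
qed

lemma Pi_eq:
  assumes "k + 1 \<le> n" shows "PiS q g k = annih (V (k + 1))"
proof -
  have fin: "finite (V (k+1))" by simp
  have d1: "degree (PiS q g k) = q^(k+1)" and l1: "lead_coeff (PiS q g k) = 1"
    using PiS_props[of k] by auto
  have d2: "degree (annih (V (k + 1))) = q^(k+1)" using annih_degree[OF fin] card_V[OF assms] by simp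
  have "degree (PiS q g k - annih (V (k + 1))) < q ^ (k+1)"
    using monic_diff_degree[OF d1 d2] l1 annih_lead[of "V (k+1)"] q_pos by simp
  moreover have "\<forall>x\<in>V (k+1). poly (PiS q g k - annih (V (k + 1))) x = 0"
  proof
    fix x assume x: "x \<in> V (k+1)"
    have "poly (PiS q g k) x = 0" using PiS_props[of k] qlin_vanish[OF _ _ x] by auto
    moreover have "poly (annih (V (k + 1))) x = 0" using annih_poly[OF fin] x by simp
    ultimately show "poly (PiS q g k - annih (V (k + 1))) x = 0" by simp
  qed
  ultimately have "PiS q g k - annih (V (k + 1)) = 0"
    using card_V[OF assms] by (intro poly_eq0_many[OF _ fin]) auto
  thus ?thesis by simp
qed

lemma Pi_nonzero:
  assumes "k + 2 \<le> n" shows "poly (PiS q g k) (g (k + 2)) \<noteq> 0"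
proof -
  have "g (k + 2) \<notin> V (k + 1)" using notin_V[of "k+1"] assms by simp
  thus ?thesis using Pi_eq[of k] assms annih_poly[of "V (k+1)"] by simp
qed

lemma g1_nonzero: "n \<ge> 1 \<Longrightarrow> g 1 \<noteq> 0"
proof
  assume "n \<ge> 1" "g 1 = 0"
  have "(0::'a) \<in> V 0" unfolding Fq_span_def by (auto intro!: exI[of _ "\<lambda>_. 0"])
  thus False using notin_V[of 0] \<open>n \<ge> 1\<close> \<open>g 1 = 0\<close> by simp
qed

lemma LamS_props:
  assumes "k + 1 \<le> n"
  shows "degree (LamS q g r k) \<le> q ^ k \<and> qlin (poly (LamS q g r k))
    \<and> (\<forall>j\<in>{1..k+1}. poly (LamS q g r k) (g j) = r j)"
  using assms
proof (induction k)
  case 0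
  have g1: "g 1 \<noteq> 0" using g1_nonzero 0 by simp
  have "poly (LamS q g r 0) = (\<lambda>x. (r 1 / g 1) * x)" by (rule ext) (simp add: mult.commute)
  hence B: "qlin (poly (LamS q g r 0))" using qlin_cmult[OF qlin_id, of "r 1 / g 1"] by simp
  have A: "degree (LamS q g r 0) \<le> q ^ 0" by (simp add: degree_smult_le)
  have C: "\<forall>j\<in>{1..0+1}. poly (LamS q g r 0) (g j) = r j" using g1 by simp
  show ?case using A B C by blast
next
  case (Suc k)
  define P where "P = PiS q g k"
  define L where "L = LamS q g r k"
  define c where "c = (poly L (g (k + 2)) - r (k + 2)) / poly P (g (k + 2))"
  have IH: "degree L \<le> q ^ k" "qlin (poly L)" "\<forall>j\<in>{1..k+1}. poly L (g j) = r j"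
    using Suc unfolding L_def by auto
  have PP: "degree P = q ^ (k+1)" "qlin (poly P)" "\<forall>j\<in>{1..k+1}. poly P (g j) = 0"
    using PiS_props[of k] unfolding P_def by auto
  have Pn: "poly P (g (k+2)) \<noteq> 0" using Pi_nonzero[of k] Suc.prems unfolding P_def by simp
  have eq: "LamS q g r (Suc k) = L - smult c P" unfolding L_def P_def c_def by simp
  have "degree (LamS q g r (Suc k)) \<le> q ^ Suc k"
  proof -
    have qq: "q ^ k \<le> q ^ Suc k" by (rule power_increasing) (use q_pos in auto)
    have a1: "degree L \<le> q ^ Suc k" using IH(1) qq by linarith
    have a2: "degree (smult c P) \<le> q ^ Suc k" using degree_smult_le[of c P] PP(1) by simp
    show ?thesis unfolding eq by (rule degree_diff_le[OF a1 a2])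
  qed
  moreover have "qlin (poly (LamS q g r (Suc k)))"
  proof -
    have "poly (L - smult c P) = (\<lambda>x. poly L x - c * poly P x)" by (rule ext) simp
    thus ?thesis unfolding eq using qlin_diff[OF IH(2) qlin_cmult[OF PP(2), of c]] by simp
  qed
  moreover have "\<forall>j\<in>{1..Suc k+1}. poly (LamS q g r (Suc k)) (g j) = r j"
  proof
    fix j assume j: "j \<in> {1..Suc k + 1}"
    show "poly (LamS q g r (Suc k)) (g j) = r j"
    proof (cases "j = k + 2")
      case True thus ?thesis using Pn unfolding eq c_def by (simp add: field_simps)
    next
      case False
      hence "j \<in> {1..k+1}" using j by auto
      thus ?thesis using IH(3) PP(3) unfolding eq by simp
    qed
  qed
  ultimately show ?case by blast
qed

end


abbreviation Perms :: "nat \<Rightarrow> (nat \<Rightarrow> nat) set" where "Perms s \<equiv> {p. p permutes {1..s}}"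

lemma detn_cong:
  assumes "\<And>a b. a \<in> {1..s} \<Longrightarrow> b \<in> {1..s} \<Longrightarrow> M a b = N a b"
  shows "detn s M = detn s N"
  unfolding detn_def
proof (rule sum.cong[OF refl])
  fix p assume "p \<in> Perms s"
  hence p: "p permutes {1..s}" by simp
  have pa: "p a \<in> {1..s}" if "a \<in> {1..s}" for a using permutes_in_image[OF p] that by simp
  have "(\<Prod>a = 1..s. M a (p a)) = (\<Prod>a = 1..s. N a (p a))"
    by (rule prod.cong[OF refl]) (rule assms, assumption, rule pa, assumption)
  thus "of_int (sign p) * (\<Prod>a = 1..s. M a (p a)) = of_int (sign p) * (\<Prod>a = 1..s. N a (p a))"
    by simp
qed

lemma detn_0: "detn 0 M = 1"
proof -
  have "Perms 0 = {id}" by auto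
  thus ?thesis unfolding detn_def by (simp add: sign_id)
qed

lemma poly_detn: "poly (detn s M) x = detn s (\<lambda>a b. poly (M a b) x)"
  unfolding detn_def by (simp add: poly_sum poly_prod)

lemma detn_col:
  fixes N :: "nat \<Rightarrow> nat \<Rightarrow> 'a::comm_ring_1"
  assumes b0: "b0 \<in> {1..s}"
  shows "detn s (\<lambda>a b. if b = b0 then \<phi> a else N a b)
       = (\<Sum>p\<in>Perms s. \<phi> (inv p b0) * (of_int (sign p) * (\<Prod>a\<in>{1..s}-{inv p b0}. N a (p a))))"
  unfolding detn_def
proof (rule sum.cong[OF refl])
  fix p assume "p \<in> Perms s"
  hence p: "p permutes {1..s}" by simp
  define a0 where "a0 = inv p b0"
  have a0: "a0 \<in> {1..s}" "p a0 = b0" unfolding a0_def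
    using permutes_in_image[OF permutes_inv[OF p]] b0 permutes_inverses[OF p] by auto
  have ne: "p a \<noteq> b0" if "a \<in> {1..s}" "a \<noteq> a0" for a
    using that a0 permutes_inj[OF p] unfolding inj_def by metis
  have "(\<Prod>a=1..s. if p a = b0 then \<phi> a else N a (p a))
      = (if p a0 = b0 then \<phi> a0 else N a0 (p a0)) * (\<Prod>a\<in>{1..s}-{a0}. if p a = b0 then \<phi> a else N a (p a))"
    by (rule prod.remove) (use a0 in auto)
  also have "(\<Prod>a\<in>{1..s}-{a0}. if p a = b0 then \<phi> a else N a (p a)) = (\<Prod>a\<in>{1..s}-{a0}. N a (p a))"
    by (rule prod.cong) (use ne in auto)
  finally show "of_int (sign p) * (\<Prod>a=1..s. if p a = b0 then \<phi> a else N a (p a))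
      = \<phi> (inv p b0) * (of_int (sign p) * (\<Prod>a\<in>{1..s}-{inv p b0}. N a (p a)))"
    using a0 unfolding a0_def by (simp add: ac_simps)
qed

lemma detn_permute_cols:
  fixes M :: "nat \<Rightarrow> nat \<Rightarrow> 'a::comm_ring_1"
  assumes \<sigma>: "\<sigma> permutes {1..s}"
  shows "detn s (\<lambda>a b. M a (\<sigma> b)) = of_int (sign \<sigma>) * detn s M"
proof -
  have perm: "permutation \<sigma>" using \<sigma> permutation_permutes by blast
  have "detn s M = (\<Sum>p\<in>Perms s. of_int (sign (\<sigma> \<circ> p)) * (\<Prod>a=1..s. M a ((\<sigma> \<circ> p) a)))"
    unfolding detn_def by (rule setum_permutations_compose_left[OF \<sigma>])
  also have "\<dots> = (\<Sum>p\<in>Perms s. of_int (sign \<sigma>) * (of_int (sign p) * (\<Prod>a=1..s. M a (\<sigma> (p a)))))"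
  proof (rule sum.cong[OF refl])
    fix p assume "p \<in> Perms s"
    hence "permutation p" using permutation_permutes by blast
    thus "of_int (sign (\<sigma> \<circ> p)) * (\<Prod>a=1..s. M a ((\<sigma> \<circ> p) a))
        = of_int (sign \<sigma>) * (of_int (sign p) * (\<Prod>a=1..s. M a (\<sigma> (p a))))"
      using perm by (simp add: sign_compose)
  qed
  also have "\<dots> = of_int (sign \<sigma>) * detn s (\<lambda>a b. M a (\<sigma> b))"
    unfolding detn_def by (simp add: sum_distrib_left)
  finally have "of_int (sign \<sigma>) * detn s M = of_int (sign \<sigma>) * of_int (sign \<sigma>) * detn s (\<lambda>a b. M a (\<sigma> b))"
    by (simp add: mult.assoc)
  also have "of_int (sign \<sigma>) * of_int (sign \<sigma>) = (1::'a)"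
    by (metis of_int_1 of_int_mult sign_idempotent)
  finally show ?thesis by simp
qed

lemma detn_equal_cols:
  fixes M :: "nat \<Rightarrow> nat \<Rightarrow> 'a::comm_ring_1"
  assumes b: "b1 \<in> {1..s}" "b2 \<in> {1..s}" "b1 \<noteq> b2"
    and eq: "\<And>a. a \<in> {1..s} \<Longrightarrow> M a b1 = M a b2"
  shows "detn s M = 0"
proof -
  define \<tau> where "\<tau> = transpose b1 b2"
  have \<tau>: "\<tau> permutes {1..s}" unfolding \<tau>_def using b by (intro permutes_swap_id) auto
  define T where "T p = (\<Prod>a=1..s. M a (p a))" for p
  define E where "E = {p \<in> Perms s. evenperm p}"
  define Od where "Od = {p \<in> Perms s. \<not> evenperm p}"
  have fin: "finite (Perms s)" by (simp add: finite_permutations)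
  have 1: "detn s M = (\<Sum>p\<in>Perms s. if evenperm p then T p else - T p)"
    unfolding detn_def T_def by (rule sum.cong) (auto simp: sign_def)
  have s1: "Perms s \<inter> {p. evenperm p} = E" "Perms s \<inter> - {p. evenperm p} = Od"
    unfolding E_def Od_def by auto
  have 2: "(\<Sum>p\<in>Perms s. if evenperm p then T p else - T p) = sum T E + (\<Sum>p\<in>Od. - T p)"
    unfolding sum.If_cases[OF fin] s1 ..
  have 3: "sum T Od = sum (\<lambda>p. T (\<tau> \<circ> p)) E"
  proof -
    have "bij_betw (\<lambda>p. \<tau> \<circ> p) E Od"
    proof (rule bij_betwI[where g = "\<lambda>p. \<tau> \<circ> p"])
      have ev: "evenperm (\<tau> \<circ> p) = (\<not> evenperm p)" if "p permutes {1..s}" for p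
      proof -
        have "permutation p" "permutation \<tau>" using that \<tau> permutation_permutes by blast+
        thus ?thesis using evenperm_comp evenperm_swap b(3) unfolding \<tau>_def by metis
      qed
      show "(\<lambda>p. \<tau> \<circ> p) \<in> E \<rightarrow> Od" unfolding E_def Od_def using ev permutes_compose[OF _ \<tau>] by auto
      show "(\<lambda>p. \<tau> \<circ> p) \<in> Od \<rightarrow> E" unfolding E_def Od_def using ev permutes_compose[OF _ \<tau>] by auto
      show "\<tau> \<circ> (\<tau> \<circ> p) = p" for p unfolding \<tau>_def by (auto simp: fun_eq_iff transpose_def)
      thus "\<tau> \<circ> (\<tau> \<circ> p) = p" for p .
    qed
    thus ?thesis by (rule sum.reindex_bij_betw[symmetric])
  qed
  have 4: "sum (\<lambda>p. T (\<tau> \<circ> p)) E = sum T E"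
  proof (rule sum.cong[OF refl])
    fix p assume "p \<in> E"
    hence p: "p permutes {1..s}" unfolding E_def by simp
    have "M a (\<tau> (p a)) = M a (p a)" if "a \<in> {1..s}" for a
      using eq[OF that] unfolding \<tau>_def by (auto simp: transpose_def)
    thus "T (\<tau> \<circ> p) = T p" unfolding T_def by (auto intro!: prod.cong)
  qed
  show ?thesis unfolding 1 2 sum_negf 3 4 by simp
qed

lemma perms_fix_last:
  assumes "s \<ge> 1"
  shows "{p. p permutes {1..s} \<and> p s = s} = Perms (s - 1)"
proof -
  have S: "{1..s} = insert s {1..s-1}" using assms by auto
  show ?thesis
  proof (rule set_eqI)
    fix p :: "nat \<Rightarrow> nat"
    show "p \<in> {p. p permutes {1..s} \<and> p s = s} \<longleftrightarrow> p \<in> Perms (s - 1)"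
    proof
      assume "p \<in> {p. p permutes {1..s} \<and> p s = s}"
      hence p: "p permutes {1..s}" "p s = s" by auto
      have "p permutes {1..s-1}" unfolding permutes_def
      proof (intro conjI allI impI)
        fix x assume "x \<notin> {1..s-1}"
        thus "p x = x" using p permutes_not_in[OF p(1)] S by (cases "x = s") auto
      next
        fix y show "\<exists>!x. p x = y" using p(1) unfolding permutes_def by blast
      qed
      thus "p \<in> Perms (s - 1)" by simp
    next
      assume "p \<in> Perms (s - 1)"
      hence p: "p permutes {1..s-1}" by simp
      have "p permutes {1..s}" by (rule permutes_subset[OF p]) auto
      moreover have "p s = s" using permutes_not_in[OF p] assms by auto
      ultimately show "p \<in> {p. p permutes {1..s} \<and> p s = s}" by simp
    qed
  qed
qed

definition cyc :: "nat \<Rightarrow> nat \<Rightarrow> nat \<Rightarrow> nat" where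
  "cyc s k b = (if b \<in> {k..s} then (if b = s then k else b + 1) else b)"

lemma cyc_props: "k \<in> {1..s} \<Longrightarrow> cyc s k permutes {1..s} \<and> sign (cyc s k) = (-1) ^ (s - k)"
proof (induction "s - k" arbitrary: k)
  case 0
  hence c: "cyc s k = id" unfolding cyc_def by (auto simp: fun_eq_iff)
  have "cyc s k permutes {1..s}" unfolding c by (rule permutes_id)
  moreover have "sign (cyc s k) = (-1)^(s-k)" unfolding c using 0(1)[symmetric] by (simp add: sign_id)
  ultimately show ?case by blast
next
  case (Suc d)
  have k: "k < s" "k \<ge> 1" using Suc by auto
  have IH: "cyc s (k+1) permutes {1..s} \<and> sign (cyc s (k+1)) = (-1) ^ (s - (k+1))"
    using Suc k by auto
  have eq: "cyc s k = transpose k (k+1) \<circ> cyc s (k+1)"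
    unfolding cyc_def using k by (auto simp: fun_eq_iff transpose_def)
  have t: "transpose k (k+1) permutes {1..s}" using k by (intro permutes_swap_id) auto
  have "permutation (transpose k (k+1))" "permutation (cyc s (k+1))"
    using t IH permutation_permutes by blast+
  hence "sign (cyc s k) = - sign (cyc s (k+1))" unfolding eq by (simp add: sign_compose sign_swap_id)
  also have "\<dots> = (-1) ^ (s - k)"
  proof -
    have "s - k = Suc (s - Suc k)" using k by simp
    thus ?thesis using IH by simp
  qed
  finally show ?case using permutes_compose[OF _ t] IH eq by auto
qed



lemma prod_const_poly: "(\<Prod>a\<in>A. [:f a:]) = [:\<Prod>a\<in>A. f a:]"
  by (induction A rule: infinite_finite_induct) (auto simp: mult.commute)

lemma monom_helper: "monom 1 e * ([:c:] * [:d:]) = monom (c * d :: 'a::comm_ring_1) e"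
  by (simp add: monom_0[symmetric] mult_monom)

definition col :: "nat \<Rightarrow> nat \<Rightarrow> nat" where "col j b = (if b < j then b else b + 1)"

context qsetting
begin

definition K :: "nat \<Rightarrow> nat \<Rightarrow> (nat \<Rightarrow> nat) \<Rightarrow> 'a" where
  "K s j p = of_int (sign p) * (\<Prod>a\<in>{1..s}-{inv p s}. g (col j (p a)) ^ (q ^ (a - 1)))"

lemma Dmat_eq:
  assumes "j \<in> {1..s}" "b \<in> {1..s}"
  shows "Dmat q s g j a b = (if b = s then monom 1 (q ^ (a - 1)) else [: g (col j b) ^ (q ^ (a - 1)) :])"
  using assms unfolding Dmat_def Let_def col_def by auto

lemma inv_in:
  assumes "p permutes {1..s}" "(s::nat) \<ge> 1" shows "inv p s \<in> {1..s}"
proof -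
  have "inv p s \<in> {1..s} \<longleftrightarrow> s \<in> {1..s}" by (rule permutes_in_image[OF permutes_inv[OF assms(1)]])
  thus ?thesis using assms(2) by simp
qed

lemma detD_expand:
  assumes j: "j \<in> {1..s}"
  shows "detn s (Dmat q s g j) = (\<Sum>p\<in>Perms s. monom (K s j p) (q ^ (inv p s - 1)))"
proof -
  have s: "s \<in> {1..s}" using j by auto
  have "detn s (Dmat q s g j) = detn s (\<lambda>a b. if b = s then monom 1 (q ^ (a - 1)) else [: g (col j b) ^ (q ^ (a - 1)) :])"
    by (rule detn_cong) (simp add: Dmat_eq[OF j])
  also have "\<dots> = (\<Sum>p\<in>Perms s. monom 1 (q ^ (inv p s - 1)) *
       (of_int (sign p) * (\<Prod>a\<in>{1..s}-{inv p s}. [: g (col j (p a)) ^ (q ^ (a - 1)) :])))"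
    by (rule detn_col[OF s])
  also have "\<dots> = (\<Sum>p\<in>Perms s. monom (K s j p) (q ^ (inv p s - 1)))"
  proof (rule sum.cong[OF refl])
    fix p
    show "monom 1 (q ^ (inv p s - 1)) *
       (of_int (sign p) * (\<Prod>a\<in>{1..s}-{inv p s}. [: g (col j (p a)) ^ (q ^ (a - 1)) :]))
      = monom (K s j p) (q ^ (inv p s - 1))"
      unfolding prod_const_poly of_int_poly K_def by (rule monom_helper)
  qed
  finally show ?thesis .
qed

lemma detD_poly:
  assumes j: "j \<in> {1..s}"
  shows "poly (detn s (Dmat q s g j)) x = (\<Sum>p\<in>Perms s. K s j p * x ^ (q ^ (inv p s - 1)))"
  unfolding detD_expand[OF j] by (simp add: poly_sum poly_monom)

lemma detD_qlin:
  assumes j: "j \<in> {1..s}"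
  shows "qlin (poly (detn s (Dmat q s g j)))"
  unfolding detD_poly[OF j, abs_def]
  by (intro qlin_sumf qlin_cmult qlin_pow)

lemma detD_degree:
  assumes j: "j \<in> {1..s}"
  shows "degree (detn s (Dmat q s g j)) \<le> q ^ (s - 1)"
  unfolding detD_expand[OF j]
proof (rule degree_sum_le)
  fix p assume "p \<in> Perms s"
  hence "inv p s \<in> {1..s}" using inv_in[of p s] j by auto
  hence "q ^ (inv p s - 1) \<le> q ^ (s - 1)" using q_pos by (intro power_increasing) auto
  thus "degree (monom (K s j p) (q ^ (inv p s - 1))) \<le> q ^ (s - 1)"
    using degree_monom_le order.trans by blast
qed (simp add: finite_permutations)

lemma detD_eval:
  assumes j: "j \<in> {1..s}"
  shows "poly (detn s (Dmat q s g j)) x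
     = detn s (\<lambda>a b. if b = s then x ^ (q ^ (a - 1)) else g (col j b) ^ (q ^ (a - 1)))"
  unfolding poly_detn by (rule detn_cong) (simp add: Dmat_eq[OF j] poly_monom)

lemma coeff_detD:
  assumes s: "s \<ge> 1"
  shows "coeff (detn s (Dmat q s g s)) (q ^ (s - 1)) = detn (s - 1) (Moore q g)"
proof -
  have ss: "s \<in> {1..s}" using s by auto
  have inj: "q ^ a = q ^ b \<longleftrightarrow> a = b" for a b using q2 by (simp add: power_inject_exp)
  have "coeff (detn s (Dmat q s g s)) (q ^ (s - 1))
      = (\<Sum>p\<in>Perms s. if inv p s - 1 = s - 1 then K s s p else 0)"
    unfolding detD_expand[OF ss] coeff_sum coeff_monom inj by (rule sum.cong) auto
  also have "\<dots> = (\<Sum>p\<in>{p. p permutes {1..s} \<and> p s = s}. K s s p)"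
  proof -
    have e: "inv p s - 1 = s - 1 \<longleftrightarrow> p s = s" if "p permutes {1..s}" for p
    proof -
      have "inv p s \<in> {1..s}" using inv_in[OF that s] .
      hence "inv p s - 1 = s - 1 \<longleftrightarrow> inv p s = s" using s by auto
      also have "\<dots> \<longleftrightarrow> p s = s" using permutes_inverses[OF that] by metis
      finally show ?thesis .
    qed
    have "(\<Sum>p\<in>Perms s. if inv p s - 1 = s - 1 then K s s p else 0)
        = (\<Sum>p\<in>Perms s. if p s = s then K s s p else 0)"
      by (rule sum.cong) (use e in auto)
    also have "\<dots> = (\<Sum>p\<in>{p. p permutes {1..s} \<and> p s = s}. K s s p)"
      by (subst sum.If_cases) (auto simp: finite_permutations intro!: sum.cong)
    finally show ?thesis .
  qed
  also have "\<dots> = (\<Sum>p\<in>Perms (s - 1). K s s p)" unfolding perms_fix_last[OF s] ..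
  also have "\<dots> = detn (s - 1) (Moore q g)"
    unfolding detn_def
  proof (rule sum.cong[OF refl])
    fix p assume "p \<in> Perms (s - 1)"
    hence p: "p permutes {1..s-1}" by simp
    have ps: "p s = s" using permutes_not_in[OF p, of s] s by auto
    hence ip: "inv p s = s" using permutes_inverses(2)[OF p] by metis
    have D: "{1..s} - {s} = {1..s-1}" using s by auto
    have "(\<Prod>a\<in>{1..s-1}. g (col s (p a)) ^ (q ^ (a - 1))) = (\<Prod>a\<in>{1..s-1}. Moore q g a (p a))"
    proof (rule prod.cong[OF refl])
      fix a assume "a \<in> {1..s-1}"
      hence "p a \<in> {1..s-1}" using permutes_in_image[OF p] by simp
      hence "p a < s" using s by auto
      thus "g (col s (p a)) ^ (q ^ (a - 1)) = Moore q g a (p a)" unfolding col_def Moore_def by simp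
    qed
    thus "K s s p = of_int (sign p) * (\<Prod>a = 1..s - 1. Moore q g a (p a))"
      unfolding K_def ip D by simp
  qed
  finally show ?thesis .
qed

lemma detD_vanish:
  assumes "b \<in> {1..s}" "b < s"
  shows "poly (detn s (Dmat q s g s)) (g b) = 0"
proof -
  have ss: "s \<in> {1..s}" using assms by auto
  show ?thesis unfolding detD_eval[OF ss]
    by (rule detn_equal_cols[of b s s]) (use assms in \<open>auto simp: col_def\<close>)
qed

lemma detD_at_last:
  assumes "s \<ge> 1"
  shows "poly (detn s (Dmat q s g s)) (g s) = detn s (Moore q g)"
proof -
  have ss: "s \<in> {1..s}" using assms by auto
  show ?thesis unfolding detD_eval[OF ss]
    by (rule detn_cong) (auto simp: col_def Moore_def)
qed

lemma Moore_nz: "s \<le> n \<Longrightarrow> detn s (Moore q g) \<noteq> 0"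
proof (induction s)
  case 0 thus ?case by (simp add: detn_0)
next
  case (Suc t)
  define s where "s = Suc t"
  have s1: "s \<ge> 1" and ss: "s \<in> {1..s}" and sn: "s \<le> n" using Suc.prems unfolding s_def by auto
  define F where "F = detn s (Dmat q s g s)"
  have "coeff F (q ^ t) \<noteq> 0" using coeff_detD[OF s1] Suc unfolding F_def s_def by simp
  hence F0: "F \<noteq> 0" by auto
  have lin: "qlin (poly F)" unfolding F_def by (rule detD_qlin[OF ss])
  have deg: "degree F \<le> q ^ t" using detD_degree[OF ss] unfolding F_def s_def by simp
  show ?case
  proof
    assume "detn (Suc t) (Moore q g) = 0"
    hence Fs: "poly F (g s) = 0" using detD_at_last[OF s1] unfolding F_def s_def by simp
    have van: "poly F (g b) = 0" if "b \<in> {1..s}" for b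
    proof (cases "b = s")
      case True thus ?thesis using Fs by simp
    next
      case False thus ?thesis using detD_vanish[of b s] that unfolding F_def by auto
    qed
    have "\<forall>x\<in>V s. poly F x = 0" using qlin_vanish[OF lin van] by blast
    moreover have "degree F < card (V s)" using card_V[OF sn] deg q2 unfolding s_def
      by (metis le_less_trans lessI power_strict_increasing_iff less_le_trans one_less_numeral_iff semiring_norm(76) numeral_le_iff)
    ultimately have "F = 0" by (intro poly_eq0_many) auto
    thus False using F0 by simp
  qed
qed

end


context qsetting
begin

lemma qL_poly: "poly (qLagrange q s g r) x
   = (\<Sum>j=1..s. ((-1) ^ (s - j) * r j / detn s (Moore q g)) * poly (detn s (Dmat q s g j)) x)"
  unfolding qLagrange_def by (simp add: poly_sum)

lemma qL_qlin: "qlin (poly (qLagrange q s g r))"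
  unfolding qL_poly[abs_def]
  by (intro qlin_sumf qlin_cmult) (rule detD_qlin, simp)

lemma qL_degree: "degree (qLagrange q s g r) \<le> q ^ (s - 1)"
  unfolding qLagrange_def
proof (rule degree_sum_le)
  fix j assume "j \<in> {1..s}"
  thus "degree (smult ((-1) ^ (s - j) * r j / detn s (Moore q g)) (detn s (Dmat q s g j))) \<le> q ^ (s - 1)"
    using detD_degree degree_smult_le order.trans by blast
qed simp

lemma detD_off:
  assumes j: "j \<in> {1..s}" and k: "k \<in> {1..s}" and jk: "j \<noteq> k"
  shows "poly (detn s (Dmat q s g j)) (g k) = 0"
proof -
  define bk where "bk = (if k < j then k else k - 1)"
  have bk: "bk \<in> {1..s}" "bk \<noteq> s" "col j bk = k"
    using j k jk unfolding bk_def col_def by auto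
  show ?thesis unfolding detD_eval[OF j]
    by (rule detn_equal_cols[of bk s s]) (use bk j in auto)
qed

lemma detD_diag:
  assumes k: "k \<in> {1..s}"
  shows "poly (detn s (Dmat q s g k)) (g k) = (-1) ^ (s - k) * detn s (Moore q g)"
proof -
  have c: "cyc s k permutes {1..s}" "sign (cyc s k) = (-1) ^ (s - k)" using cyc_props[OF k] by auto
  have "poly (detn s (Dmat q s g k)) (g k) = detn s (\<lambda>a b. Moore q g a (cyc s k b))"
    unfolding detD_eval[OF k]
    by (rule detn_cong) (use k in \<open>auto simp: col_def cyc_def Moore_def\<close>)
  also have "\<dots> = (-1) ^ (s - k) * detn s (Moore q g)"
    unfolding detn_permute_cols[OF c(1)] c(2) by simp
  finally show ?thesis .
qed

lemma qL_interp:
  assumes s: "s \<le> n" and k: "k \<in> {1..s}"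
  shows "poly (qLagrange q s g r) (g k) = r k"
proof -
  define DM where "DM = detn s (Moore q g)"
  have DM: "DM \<noteq> 0" using Moore_nz[OF s] unfolding DM_def .
  define f where "f j = ((-1) ^ (s - j) * r j / DM) * poly (detn s (Dmat q s g j)) (g k)" for j
  have "poly (qLagrange q s g r) (g k) = sum f {1..s}" unfolding qL_poly f_def DM_def ..
  also have "\<dots> = f k + sum f ({1..s} - {k})" by (rule sum.remove) (use k in auto)
  also have "sum f ({1..s} - {k}) = 0"
  proof (rule sum.neutral, rule ballI)
    fix j assume "j \<in> {1..s} - {k}"
    thus "f j = 0" unfolding f_def using detD_off[of j s k] k by auto
  qed
  also have "f k = ((-1) ^ (s - k) * (-1) ^ (s - k)) * r k * (DM / DM)"
    unfolding f_def detD_diag[OF k] DM_def[symmetric] by (simp add: field_simps)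
  also have "\<dots> = r k" using DM by (simp add: power_mult_distrib[symmetric])
  finally show ?thesis by simp
qed

lemma main_i:
  assumes i: "i \<in> {1..n}"
  shows "PiS q g (i - 1) = annih (V i) \<and> LamS q g r (i - 1) = qLagrange q i g r"
proof
  have i1: "i - 1 + 1 = i" "i - 1 + 1 \<le> n" using i by auto
  show "PiS q g (i - 1) = annih (V i)" using Pi_eq[OF i1(2)] i1(1) by simp
  define D where "D = LamS q g r (i - 1) - qLagrange q i g r"
  have L: "degree (LamS q g r (i - 1)) \<le> q ^ (i - 1)" "qlin (poly (LamS q g r (i - 1)))"
    "\<forall>j\<in>{1..i}. poly (LamS q g r (i - 1)) (g j) = r j"
    using LamS_props[OF i1(2)] i1(1) by auto
  have "degree D \<le> q ^ (i - 1)" unfolding D_def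
    by (rule degree_diff_le) (use L(1) qL_degree in auto)
  also have "\<dots> < q ^ i" using q2 i by (intro power_strict_increasing) auto
  also have "\<dots> = card (V i)" using card_V[of i] i by simp
  finally have deg: "degree D < card (V i)" .
  have "poly D = (\<lambda>x. poly (LamS q g r (i - 1)) x - poly (qLagrange q i g r) x)"
    unfolding D_def by (rule ext) simp
  hence lin: "qlin (poly D)" using qlin_diff[OF L(2) qL_qlin] by simp
  have "poly D (g j) = 0" if "j \<in> {1..i}" for j
    unfolding D_def using L(3) qL_interp[of i j] that i by simp
  hence "\<forall>x\<in>V i. poly D x = 0" using qlin_vanish[OF lin] by blast
  hence "D = 0" using deg by (intro poly_eq0_many) auto
  thus "LamS q g r (i - 1) = qLagrange q i g r" unfolding D_def by simp
qed

end

theorem proposition5: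
  fixes q m n :: nat and g r :: "nat \<Rightarrow> 'a::{finite, field}"
  assumes "prime_power q" and "m \<ge> 1" and "card (UNIV :: 'a set) = q ^ m"
    and "Fq_lin_indep q n g"
  shows "\<forall>i\<in>{1..n}. PiS q g (i - 1) = annih (Fq_span q i g)
                    \<and> LamS q g r (i - 1) = qLagrange q i g r"
proof -
  have frob: "\<And>x y::'a. (x + y) ^ q = x ^ q + y ^ q" using frob_add[OF assms(1-3)] .
  have q2: "q \<ge> 2"
  proof -
    obtain p k where pk: "prime p" "k > 0" "q = p ^ k" using assms(1) unfolding prime_power_def by auto
    have "p \<ge> 2" using pk(1) prime_ge_2_nat by blast
    hence "p ^ 1 \<le> p ^ k" using pk(2) by (intro power_increasing) auto
    thus ?thesis using pk \<open>p \<ge> 2\<close> by simp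
  qed
  have cF: "card (Fq q :: 'a set) = q" using card_Fq[OF frob q2 assms(2,3)] .
  interpret qsetting q n g using frob q2 cF assms(4) by unfold_locales auto
  show ?thesis using main_i by blast
qed

end
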